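(* Let $n \in \mathbb{N}$ and let $y \in L^2([0,2]^n)$. Suppose $x^\dagger \in L^2([0,1]^n)$ satisfies $[x^\dagger * x^\dagger](s) = y(s)$ for almost every $s \in [0,2]^n$. Then $x^\dagger$ and $-x^\dagger$ are the only solutions: if $x \in L^2([0,1]^n)$ satisfies $[x * x](s) = y(s)$ for almost every $s \in [0,2]^n$, then $x = x^\dagger$ almost everywhere or $x = -x^\dagger$ almost everywhere.
   Context: All functions are real-valued. $L^2([0,1]^n)$ denotes the real functions in $L^2(\mathbb{R}^n)$ whose essential support is contained in the unit cube $[0,1]^n$ (i.e. they vanish a.e. outside $[0,1]^n$); similarly for $L^2([0,2]^n)$. The convolution is $[f*g](s) = \int_{\mathbb{R}^n} f(s-t)\,g(t)\,dt$ for $s \in \mathbb{R}^n$; for $f,g \in L^2([0,1]^n)$ one has $f*g \in L^2([0,2]^n)$. *)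

theory Defs
  imports "HOL-Analysis.Analysis"
begin

definition cube :: "real \<Rightarrow> (real^'n) set" where
  "cube c = {x. \<forall>i. 0 \<le> x $ i \<and> x $ i \<le> c}"

definition L2_cube :: "real \<Rightarrow> (real^'n \<Rightarrow> real) set" where
  "L2_cube c = {f. f \<in> borel_measurable lebesgue
                 \<and> integrable lebesgue (\<lambda>x. (f x)\<^sup>2)
                 \<and> (AE x in lebesgue. x \<notin> cube c \<longrightarrow> f x = 0)}"

definition conv :: "(real^'n \<Rightarrow> real) \<Rightarrow> (real^'n \<Rightarrow> real) \<Rightarrow> real^'n \<Rightarrow> real" where
  "conv f g s = (LINT t|lebesgue. f (s - t) * g t)"

end

theory Submission
  imports Defs "HOL-Computational_Algebra.Formal_Power_Series"
begin


lemma cube_cbox: "cube c = cbox (0::real^'n) (vec c)"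
  by (auto simp: cube_def mem_box_cart)

lemma compact_cube: "compact (cube c :: (real^'n) set)"
  unfolding cube_cbox by (rule compact_cbox)

lemma closed_cube: "closed (cube c :: (real^'n) set)"
  by (simp add: compact_cube compact_imp_closed)

lemma integrable_mult_cont:
  fixes u f :: "real^'n \<Rightarrow> real"
  assumes u: "u \<in> borel_measurable borel" "integrable lborel u" "\<forall>t. t \<notin> K \<longrightarrow> u t = 0"
    and K: "compact K" and f: "continuous_on K f"
  shows "integrable lborel (\<lambda>t. u t * f t)"
proof -
  obtain B where B: "\<forall>t\<in>K. \<bar>f t\<bar> \<le> B"
    using compact_continuous_image[OF f K] compact_imp_bounded bounded_real by (metis image_eqI)
  have m1: "(\<lambda>t. indicator K t *\<^sub>R f t) \<in> borel_measurable borel"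
    by (rule borel_measurable_continuous_on_indicator) (use K f in \<open>auto intro: borel_compact\<close>)
  have eq: "(\<lambda>t. u t * f t) = (\<lambda>t. u t * (indicator K t *\<^sub>R f t))"
    using u(3) by (auto simp: indicator_def fun_eq_iff)
  have meas: "(\<lambda>t. u t * f t) \<in> borel_measurable borel"
    unfolding eq using u(1) m1 by measurable
  show ?thesis
  proof (rule Bochner_Integration.integrable_bound)
    show "integrable lborel (\<lambda>t. B * u t)" using u(2) by simp
    show "(\<lambda>t. u t * f t) \<in> borel_measurable lborel" using meas by simp
    show "AE x in lborel. norm (u x * f x) \<le> norm (B * u x)"
    proof (rule AE_I2)
      fix t show "norm (u t * f t) \<le> norm (B * u t)"
      proof (cases "t \<in> K")
        case True
        then have "\<bar>f t\<bar> \<le> B" using B by auto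
        then have "\<bar>u t\<bar> * \<bar>f t\<bar> \<le> \<bar>u t\<bar> * \<bar>B\<bar>" by (intro mult_left_mono) auto
        then show ?thesis by (simp add: abs_mult mult.commute)
      next
        case False then show ?thesis using u(3) by simp
      qed
    qed
  qed
qed

lemma abs_le_1_sq: "\<bar>a::real\<bar> \<le> 1 + a\<^sup>2"
proof (cases "\<bar>a\<bar> \<le> 1")
  case True then show ?thesis by (simp add: add_increasing2)
next
  case False
  then have "\<bar>a\<bar> * 1 \<le> \<bar>a\<bar> * \<bar>a\<bar>" by (intro mult_left_mono) auto
  then show ?thesis by (simp add: power2_eq_square abs_mult_self)
qed

lemma L2_borel_version:
  fixes x :: "real^'n \<Rightarrow> real"
  assumes "x \<in> L2_cube 1"
  obtains g where "g \<in> borel_measurable borel" "integrable lborel g" "\<forall>t. t \<notin> cube 1 \<longrightarrow> g t = 0"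
    "AE t in lborel. x t = g t"
proof -
  from assms have xm: "x \<in> borel_measurable lebesgue" and x2: "integrable lebesgue (\<lambda>t. (x t)\<^sup>2)"
    and xs: "AE t in lebesgue. t \<notin> cube 1 \<longrightarrow> x t = 0" by (auto simp: L2_cube_def)
  obtain g0 where g0: "g0 \<in> borel_measurable lborel" "AE t in lborel. x t = g0 t"
    using completion_ex_borel_measurable_real[OF xm] by blast
  have g0b: "g0 \<in> borel_measurable borel" using g0(1) by simp
  define g where "g t = indicator (cube 1) t * g0 t" for t
  have ind: "indicator (cube 1 :: (real^'n) set) \<in> borel_measurable borel"
    by (intro borel_measurable_indicator borel_closed closed_cube)
  have gm: "g \<in> borel_measurable borel" unfolding g_def[abs_def] using g0b ind by measurable
  have xs': "AE t in lborel. t \<notin> cube 1 \<longrightarrow> x t = 0" using xs by (simp add: AE_completion_iff)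
  have ae: "AE t in lborel. x t = g t"
    using g0(2) xs' by eventually_elim (auto simp: g_def indicator_def)
  have "integrable lebesgue (\<lambda>t. (g0 t)\<^sup>2)"
  proof (subst integrable_cong_AE[symmetric])
    show "(\<lambda>t. (x t)\<^sup>2) \<in> borel_measurable lebesgue" using xm by measurable
    show "(\<lambda>t. (g0 t)\<^sup>2) \<in> borel_measurable lebesgue" using g0b by (intro measurable_completion) measurable
    show "AE t in lebesgue. (x t)\<^sup>2 = (g0 t)\<^sup>2" using g0(2) by (intro AE_completion) auto
  qed (use x2 in auto)
  then have g02: "integrable lborel (\<lambda>t. (g0 t)\<^sup>2)"
    by (subst (asm) integrable_completion) (use g0b in measurable)
  have indi: "integrable lborel (indicator (cube 1 :: (real^'n) set) :: _ \<Rightarrow> real)"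
  proof (intro integrable_real_indicator)
    show "(cube 1 :: (real^'n) set) \<in> sets lborel" using borel_closed[OF closed_cube] by simp
    show "emeasure lborel (cube 1 :: (real^'n) set) < \<infinity>"
      using emeasure_lborel_cbox_finite[of "0::real^'n" "vec 1"] by (simp add: cube_cbox)
  qed
  have gi: "integrable lborel g"
  proof (rule Bochner_Integration.integrable_bound)
    show "integrable lborel (\<lambda>t. indicator (cube 1) t + (g0 t)\<^sup>2)" using indi g02 by auto
    show "g \<in> borel_measurable lborel" using gm by simp
    show "AE t in lborel. norm (g t) \<le> norm (indicator (cube 1) t + (g0 t)\<^sup>2)"
      by (intro AE_I2) (auto simp: g_def indicator_def abs_le_1_sq)
  qed
  show ?thesis
    by (rule that[OF gm gi _ ae]) (auto simp: g_def)
qed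

lemma distr_reflect: "distr lborel borel (\<lambda>t. s - t) = (lborel :: ('a::euclidean_space) measure)"
proof -
  have "lborel = density (distr lborel borel (\<lambda>x. s + (-1) *\<^sub>R x)) (\<lambda>_. \<bar>-1::real\<bar>^DIM('a))"
    by (rule lborel_affine) simp
  then show ?thesis by (simp add: density_1)
qed

lemma AE_reflect:
  fixes s :: "'a::euclidean_space"
  assumes "AE r in lborel. P r" shows "AE t in lborel. P (s - t)"
proof -
  from assms obtain N where N: "N \<in> null_sets lborel" "{r \<in> space lborel. \<not> P r} \<subseteq> N"
    by (auto simp: eventually_ae_filter)
  have meas: "(\<lambda>t. s - t) \<in> borel_measurable (lborel :: 'a measure)" by simp
  have "emeasure lborel ((\<lambda>t. s - t) -` N \<inter> space lborel) = emeasure (distr lborel borel (\<lambda>t. s - t)) N"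
    using N(1) meas by (subst emeasure_distr) auto
  also have "\<dots> = 0" using N(1) by (simp add: distr_reflect null_setsD1)
  finally have "(\<lambda>t. s - t) -` N \<inter> space lborel \<in> null_sets lborel"
    using N(1) measurable_sets[OF meas, of N] by (auto simp: null_sets_def)
  then show ?thesis
    by (rule AE_I') (use N(2) in auto)
qed

lemma nn_integral_translate:
  fixes f :: "'a::euclidean_space \<Rightarrow> ennreal"
  assumes [measurable]: "f \<in> borel_measurable borel"
  shows "(\<integral>\<^sup>+ s. f (s - t) \<partial>lborel) = (\<integral>\<^sup>+ r. f r \<partial>lborel)"
proof -
  have "(\<integral>\<^sup>+ r. f r \<partial>lborel) = (\<integral>\<^sup>+ r. f r \<partial>(distr lborel borel ((+) (-t))))"
    by (simp add: lborel_distr_plus)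
  also have "\<dots> = (\<integral>\<^sup>+ s. f (-t + s) \<partial>lborel)"
    by (subst nn_integral_distr) auto
  finally show ?thesis by simp
qed

lemma integral_translate:
  fixes f :: "'a::euclidean_space \<Rightarrow> real"
  assumes [measurable]: "f \<in> borel_measurable borel"
  shows "(\<integral> r. f (r + t) \<partial>lborel) = (\<integral> r. f r \<partial>lborel)"
proof -
  have "(\<integral> r. f r \<partial>lborel) = (\<integral> r. f r \<partial>(distr lborel borel ((+) t)))"
    by (simp add: lborel_distr_plus)
  also have "\<dots> = (\<integral> r. f (t + r) \<partial>lborel)"
    by (subst integral_distr) auto
  finally show ?thesis by (simp add: add.commute)
qed

lemma integrable_translate:
  fixes f :: "'a::euclidean_space \<Rightarrow> real"
  assumes [measurable]: "f \<in> borel_measurable borel" and "integrable lborel f"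
  shows "integrable lborel (\<lambda>r. f (r + t))"
proof -
  have "integrable (distr lborel borel ((+) t)) f"
    using assms by (simp add: lborel_distr_plus)
  then have "integrable lborel (\<lambda>r. f (t + r))"
    by (subst (asm) integrable_distr_eq) auto
  then show ?thesis by (simp add: add.commute)
qed

lemma conv_eq:
  fixes x z g h :: "real^'n \<Rightarrow> real"
  assumes xm: "x \<in> borel_measurable lebesgue" and zm: "z \<in> borel_measurable lebesgue"
    and gm[measurable]: "g \<in> borel_measurable borel" and hm[measurable]: "h \<in> borel_measurable borel"
    and xg: "AE t in lborel. x t = g t" and zh: "AE t in lborel. z t = h t"
  shows "conv x z s = (\<integral> t. g (s - t) * h t \<partial>lborel)"
proof -
  have ae: "AE t in lborel. x (s - t) * z t = g (s - t) * h t"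
    using AE_reflect[OF xg, of s] zh by eventually_elim auto
  have m2: "(\<lambda>t. g (s - t) * h t) \<in> borel_measurable lebesgue"
    by (intro measurable_completion) measurable
  have m1: "(\<lambda>t. x (s - t) * z t) \<in> borel_measurable lebesgue"
    by (rule borel_measurable_AE[OF m2]) (use ae in \<open>auto intro: AE_completion\<close>)
  have "conv x z s = (\<integral> t. g (s - t) * h t \<partial>lebesgue)"
    unfolding conv_def by (rule integral_cong_AE[OF m1 m2]) (use ae in \<open>auto intro: AE_completion\<close>)
  also have "\<dots> = (\<integral> t. g (s - t) * h t \<partial>lborel)"
    by (rule integral_completion) measurable
  finally show ?thesis .
qed



lemma conv_prod_integrable:
  fixes g h :: "'a::euclidean_space \<Rightarrow> real"
  assumes gm[measurable]: "g \<in> borel_measurable borel" and gi: "integrable lborel g"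
    and hm[measurable]: "h \<in> borel_measurable borel" and hi: "integrable lborel h"
  shows "integrable (lborel \<Otimes>\<^sub>M lborel) (\<lambda>(s,t). g (s - t) * h t)"
proof (subst integrable_iff_bounded, intro conjI)
  show "(\<lambda>(s,t). g (s - t) * h t) \<in> borel_measurable (lborel \<Otimes>\<^sub>M lborel)" by measurable
  have "(\<integral>\<^sup>+ p. ennreal (norm ((\<lambda>(s,t). g (s - t) * h t) p)) \<partial>(lborel \<Otimes>\<^sub>M lborel))
      = (\<integral>\<^sup>+ t. (\<integral>\<^sup>+ s. ennreal (norm ((\<lambda>(s,t). g (s - t) * h t) (s,t))) \<partial>lborel) \<partial>lborel)"
    by (rule lborel_pair.nn_integral_snd[symmetric]) measurable
  also have "\<dots> = (\<integral>\<^sup>+ t. ennreal \<bar>h t\<bar> * (\<integral>\<^sup>+ s. ennreal \<bar>g (s - t)\<bar> \<partial>lborel) \<partial>lborel)"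
    by (intro nn_integral_cong) (simp add: abs_mult ennreal_mult nn_integral_cmult[symmetric] mult.commute)
  also have "\<dots> = (\<integral>\<^sup>+ t. ennreal \<bar>h t\<bar> * (\<integral>\<^sup>+ r. ennreal \<bar>g r\<bar> \<partial>lborel) \<partial>lborel)"
    by (intro nn_integral_cong) (subst nn_integral_translate[where f="\<lambda>r. ennreal \<bar>g r\<bar>"], auto)
  also have "\<dots> = (\<integral>\<^sup>+ t. ennreal \<bar>h t\<bar> \<partial>lborel) * (\<integral>\<^sup>+ r. ennreal \<bar>g r\<bar> \<partial>lborel)"
    by (rule nn_integral_multc) measurable
  also have "\<dots> < \<infinity>"
    using gi hi by (simp add: integrable_iff_bounded ennreal_mult_less_top)
  finally show "(\<integral>\<^sup>+ p. ennreal (norm ((\<lambda>(s,t). g (s - t) * h t) p)) \<partial>(lborel \<Otimes>\<^sub>M lborel)) < \<infinity>" .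
qed

definition good :: "(real^'n \<Rightarrow> real) \<Rightarrow> bool" where
  "good g \<longleftrightarrow> g \<in> borel_measurable borel \<and> integrable lborel g \<and> (\<forall>t. t \<notin> cube 1 \<longrightarrow> g t = 0)"

definition mom :: "(real^'n \<Rightarrow> real) \<Rightarrow> real^'n \<Rightarrow> nat \<Rightarrow> real" where
  "mom g w i = (\<integral> t. g t * (w \<bullet> t) ^ i \<partial>lborel)"

definition cv :: "(real^'n \<Rightarrow> real) \<Rightarrow> (real^'n \<Rightarrow> real) \<Rightarrow> real^'n \<Rightarrow> real" where
  "cv g h s = (\<integral> t. g (s - t) * h t \<partial>lborel)"

lemma good_int:
  assumes "good g" "continuous_on UNIV q"
  shows "integrable lborel (\<lambda>t. g t * q t)"
  using assms by (intro integrable_mult_cont[where K="cube 1"])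
    (auto simp: good_def compact_cube intro: continuous_on_subset)

lemma inner_calc:
  assumes g: "good g"
  shows "(\<integral> s. g (s - t) * (w \<bullet> s) ^ k \<partial>lborel)
       = (\<Sum>i\<le>k. of_nat (k choose i) * (w \<bullet> t) ^ (k - i) * mom g w i)"
proof -
  have gm[measurable]: "g \<in> borel_measurable borel" using g by (simp add: good_def)
  have "(\<integral> s. g (s - t) * (w \<bullet> s) ^ k \<partial>lborel) = (\<integral> r. g r * (w \<bullet> (r + t)) ^ k \<partial>lborel)"
    using integral_translate[of "\<lambda>s. g (s - t) * (w \<bullet> s) ^ k" t] by simp
  also have "\<dots> = (\<integral> r. (\<Sum>i\<le>k. of_nat (k choose i) * (w \<bullet> t) ^ (k - i) * (g r * (w \<bullet> r) ^ i)) \<partial>lborel)"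
    by (intro Bochner_Integration.integral_cong refl)
       (simp add: inner_add_right binomial_ring sum_distrib_left mult_ac)
  also have "\<dots> = (\<Sum>i\<le>k. of_nat (k choose i) * (w \<bullet> t) ^ (k - i) * mom g w i)"
    by (subst Bochner_Integration.integral_sum) (auto intro!: good_int[OF g] continuous_intros simp: mom_def)
  finally show ?thesis .
qed

lemma cube_add: "a \<in> cube 1 \<Longrightarrow> b \<in> cube 1 \<Longrightarrow> (a + b :: real^'n) \<in> cube 2"
  by (auto simp: cube_def) (smt (verit))+

lemma cv_moment:
  fixes g h :: "real^'n \<Rightarrow> real" and w :: "real^'n"
  assumes g: "good g" and h: "good h"
  shows "integrable lborel (\<lambda>s. cv g h s * (w \<bullet> s) ^ k)"
    and "(\<integral> s. cv g h s * (w \<bullet> s) ^ k \<partial>lborel) = (\<Sum>i\<le>k. of_nat (k choose i) * mom g w i * mom h w (k - i))"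
proof -
  have gm[measurable]: "g \<in> borel_measurable borel" and gi: "integrable lborel g"
    and g0: "\<And>t. t \<notin> cube 1 \<Longrightarrow> g t = 0" using g by (auto simp: good_def)
  have hm[measurable]: "h \<in> borel_measurable borel" and hi: "integrable lborel h"
    and h0: "\<And>t. t \<notin> cube 1 \<Longrightarrow> h t = 0" using h by (auto simp: good_def)
  define F where "F s t = g (s - t) * h t * (w \<bullet> s) ^ k" for s t
  have "continuous_on (cube 2) (\<lambda>s::real^'n. (w \<bullet> s) ^ k)" by (intro continuous_intros)
  then obtain B where B: "\<forall>s\<in>cube 2. \<bar>(w \<bullet> s) ^ k\<bar> \<le> B"
    using compact_continuous_image[OF _ compact_cube] compact_imp_bounded bounded_real
    by (metis image_eqI)
  have Fint: "integrable (lborel \<Otimes>\<^sub>M lborel) (\<lambda>(s,t). F s t)"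
  proof (rule Bochner_Integration.integrable_bound)
    show "integrable (lborel \<Otimes>\<^sub>M lborel) (\<lambda>p. B * (case p of (s,t) \<Rightarrow> g (s - t) * h t))"
      using conv_prod_integrable[OF gm gi hm hi] by auto
    show "(\<lambda>(s,t). F s t) \<in> borel_measurable (lborel \<Otimes>\<^sub>M lborel)"
      unfolding F_def by measurable
    show "AE p in lborel \<Otimes>\<^sub>M lborel. norm (case p of (s,t) \<Rightarrow> F s t) \<le> norm (B * (case p of (s,t) \<Rightarrow> g (s - t) * h t))"
    proof (rule AE_I2, clarify)
      fix s t :: "real^'n"
      show "norm (F s t) \<le> norm (B * (g (s - t) * h t))"
      proof (cases "g (s - t) * h t = 0")
        case True then show ?thesis by (auto simp: F_def)
      next
        case False
        then have "s - t \<in> cube 1" "t \<in> cube 1" using g0 h0 by force+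
        then have "s \<in> cube 2" using cube_add[of "s - t" t] by simp
        then have "\<bar>(w \<bullet> s) ^ k\<bar> \<le> B" using B by auto
        then have "\<bar>g (s - t) * h t\<bar> * \<bar>(w \<bullet> s) ^ k\<bar> \<le> \<bar>g (s - t) * h t\<bar> * \<bar>B\<bar>"
          by (intro mult_left_mono) auto
        then show ?thesis by (simp add: F_def abs_mult mult_ac)
      qed
    qed
  qed
  have eqF: "(\<integral> t. F s t \<partial>lborel) = cv g h s * (w \<bullet> s) ^ k" for s
    unfolding F_def cv_def by (rule integral_mult_left_zero)
  show "integrable lborel (\<lambda>s. cv g h s * (w \<bullet> s) ^ k)"
    using lborel_pair.integrable_fst[OF Fint] by (simp add: eqF)
  have "(\<integral> s. cv g h s * (w \<bullet> s) ^ k \<partial>lborel) = (\<integral> s. (\<integral> t. F s t \<partial>lborel) \<partial>lborel)"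
    by (simp add: eqF)
  also have "\<dots> = (\<integral> t. (\<integral> s. F s t \<partial>lborel) \<partial>lborel)"
    using lborel_pair.Fubini_integral[OF Fint] by simp
  also have "\<dots> = (\<integral> t. h t * (\<Sum>i\<le>k. of_nat (k choose i) * (w \<bullet> t) ^ (k - i) * mom g w i) \<partial>lborel)"
  proof (intro Bochner_Integration.integral_cong refl)
    fix t
    have "(\<integral> s. F s t \<partial>lborel) = h t * (\<integral> s. g (s - t) * (w \<bullet> s) ^ k \<partial>lborel)"
      unfolding F_def by (subst integral_mult_right_zero[symmetric]) (simp add: mult_ac)
    then show "(\<integral> s. F s t \<partial>lborel) = h t * (\<Sum>i\<le>k. of_nat (k choose i) * (w \<bullet> t) ^ (k - i) * mom g w i)"
      by (simp add: inner_calc[OF g])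
  qed
  also have "\<dots> = (\<integral> t. (\<Sum>i\<le>k. of_nat (k choose i) * mom g w i * (h t * (w \<bullet> t) ^ (k - i))) \<partial>lborel)"
    by (intro Bochner_Integration.integral_cong refl) (simp add: sum_distrib_left mult_ac)
  also have "\<dots> = (\<Sum>i\<le>k. of_nat (k choose i) * mom g w i * mom h w (k - i))"
    by (subst Bochner_Integration.integral_sum) (auto intro!: good_int[OF h] continuous_intros simp: mom_def)
  finally show "(\<integral> s. cv g h s * (w \<bullet> s) ^ k \<partial>lborel) = (\<Sum>i\<le>k. of_nat (k choose i) * mom g w i * mom h w (k - i))" .
qed



lemma mom_line:
  fixes u :: "real^'n \<Rightarrow> real"
  assumes u: "good u"
  shows "mom u (a + s *\<^sub>R d) k
       = (\<Sum>i\<le>k. (of_nat (k choose i) * (\<integral> t. u t * ((d \<bullet> t) ^ i * (a \<bullet> t) ^ (k - i)) \<partial>lborel)) * s ^ i)"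
proof -
  have "mom u (a + s *\<^sub>R d) k
      = (\<integral> t. (\<Sum>i\<le>k. (of_nat (k choose i) * s ^ i) * (u t * ((d \<bullet> t) ^ i * (a \<bullet> t) ^ (k - i)))) \<partial>lborel)"
    unfolding mom_def
  proof (intro Bochner_Integration.integral_cong refl)
    fix t
    have "(a + s *\<^sub>R d) \<bullet> t = s * (d \<bullet> t) + a \<bullet> t" by (simp add: inner_add_left)
    then show "u t * ((a + s *\<^sub>R d) \<bullet> t) ^ k
      = (\<Sum>i\<le>k. (of_nat (k choose i) * s ^ i) * (u t * ((d \<bullet> t) ^ i * (a \<bullet> t) ^ (k - i))))"
      by (simp add: binomial_ring sum_distrib_left power_mult_distrib mult_ac)
  qed
  also have "\<dots> = (\<Sum>i\<le>k. (of_nat (k choose i) * s ^ i) * (\<integral> t. u t * ((d \<bullet> t) ^ i * (a \<bullet> t) ^ (k - i)) \<partial>lborel))"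
    by (subst Bochner_Integration.integral_sum) (auto intro!: good_int[OF u] continuous_intros)
  finally show ?thesis by (simp add: mult_ac)
qed

lemma mom_line_finite:
  fixes u :: "real^'n \<Rightarrow> real"
  assumes u: "good u" and nz: "mom u (a + s0 *\<^sub>R d) k \<noteq> 0"
  shows "finite {s. mom u (a + s *\<^sub>R d) k = 0}"
proof -
  define c where "c i = of_nat (k choose i) * (\<integral> t. u t * ((d \<bullet> t) ^ i * (a \<bullet> t) ^ (k - i)) \<partial>lborel)" for i
  have eq: "mom u (a + s *\<^sub>R d) k = (\<Sum>i\<le>k. c i * s ^ i)" for s
    unfolding c_def by (rule mom_line[OF u])
  have "\<exists>i. i \<le> k \<and> c i \<noteq> 0"
  proof (rule ccontr)
    assume "\<not> ?thesis"
    then have "(\<Sum>i\<le>k. c i * s0 ^ i) = 0" by auto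
    with nz eq show False by simp
  qed
  then have "finite {s. (\<Sum>i\<le>k. c i * s ^ i) = 0}" by (rule polyfun_rootbound_finite)
  then show ?thesis by (simp add: eq)
qed

lemma sign_global:
  fixes u1 u2 :: "real^'n \<Rightarrow> real"
  assumes u1: "good u1" and u2: "good u2"
    and H: "\<And>w. (\<forall>i. mom u1 w i = 0) \<or> (\<forall>i. mom u2 w i = 0)"
  shows "(\<forall>w i. mom u1 w i = 0) \<or> (\<forall>w i. mom u2 w i = 0)"
proof (rule ccontr)
  assume "\<not> ?thesis"
  then obtain w0 k w1 j where n1: "mom u1 w0 k \<noteq> 0" and n2: "mom u2 w1 j \<noteq> 0" by auto
  define d where "d = w1 - w0"
  have f1: "finite {s. mom u1 (w0 + s *\<^sub>R d) k = 0}"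
    by (rule mom_line_finite[OF u1, of _ 0]) (use n1 in simp)
  have f2: "finite {s. mom u2 (w0 + s *\<^sub>R d) j = 0}"
    by (rule mom_line_finite[OF u2, of _ 1]) (use n2 in \<open>simp add: d_def\<close>)
  have "UNIV \<subseteq> {s. mom u1 (w0 + s *\<^sub>R d) k = 0} \<union> {s. mom u2 (w0 + s *\<^sub>R d) j = 0}"
    using H by blast
  then have "finite (UNIV :: real set)" using f1 f2 finite_subset by blast
  then show False using infinite_UNIV_char_0 by blast
qed



lemma binom_sum_fact:
  fixes c :: "nat \<Rightarrow> real"
  shows "(\<Sum>i=0..k. c i / fact i * (c (k - i) / fact (k - i)))
       = (\<Sum>i\<le>k. of_nat (k choose i) * c i * c (k - i)) / fact k"
proof -
  have "(\<Sum>i\<le>k. of_nat (k choose i) * c i * c (k - i)) / fact k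
      = (\<Sum>i\<le>k. of_nat (k choose i) * c i * c (k - i) / fact k)"
    by (simp add: sum_divide_distrib)
  also have "\<dots> = (\<Sum>i\<le>k. c i / fact i * (c (k - i) / fact (k - i)))"
  proof (intro sum.cong refl)
    fix i assume "i \<in> {..k}"
    then have "i \<le> k" by simp
    then show "of_nat (k choose i) * c i * c (k - i) / fact k = c i / fact i * (c (k - i) / fact (k - i))"
      by (simp add: binomial_fact field_simps)
  qed
  finally show ?thesis by (simp add: atLeast0AtMost)
qed

lemma fps_sign:
  fixes a b :: "nat \<Rightarrow> real"
  assumes "\<And>k. (\<Sum>i\<le>k. of_nat (k choose i) * a i * a (k - i)) = (\<Sum>i\<le>k. of_nat (k choose i) * b i * b (k - i))"
  shows "(\<forall>i. a i = b i) \<or> (\<forall>i. a i = - b i)"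
proof -
  define A where "A = Abs_fps (\<lambda>i. a i / fact i)"
  define B where "B = Abs_fps (\<lambda>i. b i / fact i)"
  have "A * A = B * B"
  proof (rule fps_ext)
    fix k
    show "fps_nth (A * A) k = fps_nth (B * B) k"
      unfolding A_def B_def fps_mult_nth fps_nth_Abs_fps binom_sum_fact assms ..
  qed
  then have "(A - B) * (A + B) = 0" by (simp add: algebra_simps)
  then have "A = B \<or> A = - B" by (auto simp: eq_neg_iff_add_eq_0)
  then show ?thesis
  proof
    assume "A = B"
    then have "fps_nth A i = fps_nth B i" for i by simp
    then show ?thesis unfolding A_def B_def by simp
  next
    assume "A = - B"
    then have "fps_nth A i = fps_nth (- B) i" for i by simp
    then show ?thesis unfolding A_def B_def by (simp add: divide_simps)
  qed
qed



lemma nn_pos_neg_eq: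
  fixes v :: "'a \<Rightarrow> real"
  assumes vi: "integrable M v" and v0: "integral\<^sup>L M v = 0"
  shows "(\<integral>\<^sup>+ t. ennreal (v t) \<partial>M) = (\<integral>\<^sup>+ t. ennreal (- v t) \<partial>M)"
proof -
  have vm[measurable]: "v \<in> borel_measurable M" using vi by simp
  have fin: "(\<integral>\<^sup>+ t. ennreal (norm (v t)) \<partial>M) < \<infinity>" using vi by (simp add: integrable_iff_bounded)
  have f1: "(\<integral>\<^sup>+ t. ennreal (v t) \<partial>M) < \<infinity>"
    by (rule le_less_trans[OF _ fin]) (intro nn_integral_mono, simp)
  have f2: "(\<integral>\<^sup>+ t. ennreal (- v t) \<partial>M) < \<infinity>"
    by (rule le_less_trans[OF _ fin]) (intro nn_integral_mono, simp)
  have "enn2real (\<integral>\<^sup>+ t. ennreal (v t) \<partial>M) = enn2real (\<integral>\<^sup>+ t. ennreal (- v t) \<partial>M)"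
    using real_lebesgue_integral_def[OF vi] v0 by simp
  then have "ennreal (enn2real (\<integral>\<^sup>+ t. ennreal (v t) \<partial>M)) = ennreal (enn2real (\<integral>\<^sup>+ t. ennreal (- v t) \<partial>M))"
    by simp
  with f1 f2 show ?thesis by (simp add: ennreal_enn2real)
qed

lemma sets_borel_closed: "sets (borel :: 'a::topological_space measure) = sigma_sets UNIV (Collect closed)"
  by (subst borel_eq_closed) (simp add: sets_measure_of)

lemma closed_zero_AE_le:
  fixes u :: "'a::euclidean_space \<Rightarrow> real"
  assumes um[measurable]: "u \<in> borel_measurable borel" and ui: "integrable lborel u"
    and H: "\<And>C. closed C \<Longrightarrow> (\<integral> t. u t * indicator C t \<partial>lborel) = 0"
  shows "AE t in lborel. u t \<le> 0"
proof -
  define M where "M = density lborel (\<lambda>t. ennreal (u t))"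
  define N where "N = density lborel (\<lambda>t. ennreal (- u t))"
  have emC: "emeasure M C = emeasure N C" if C: "closed C" for C
  proof -
    have Cs[measurable]: "C \<in> sets borel" using C by (rule borel_closed)
    have vi: "integrable lborel (\<lambda>t. u t * indicator C t)"
      by (rule integrable_real_mult_indicator) (use ui in auto)
    have "emeasure M C = (\<integral>\<^sup>+ t. ennreal (u t) * indicator C t \<partial>lborel)"
      unfolding M_def by (rule emeasure_density) auto
    also have "\<dots> = (\<integral>\<^sup>+ t. ennreal (u t * indicator C t) \<partial>lborel)"
      by (intro nn_integral_cong) (simp add: indicator_def)
    also have "\<dots> = (\<integral>\<^sup>+ t. ennreal (- (u t * indicator C t)) \<partial>lborel)"
      by (rule nn_pos_neg_eq[OF vi H[OF C]])
    also have "\<dots> = (\<integral>\<^sup>+ t. ennreal (- u t) * indicator C t \<partial>lborel)"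
      by (intro nn_integral_cong) (simp add: indicator_def)
    also have "\<dots> = emeasure N C"
      unfolding N_def by (rule emeasure_density[symmetric]) auto
    finally show ?thesis .
  qed
  have "M = N"
  proof (rule measure_eqI_generator_eq[where E="Collect closed" and \<Omega>=UNIV and A="\<lambda>_. UNIV"])
    show "Int_stable (Collect closed)" by (auto simp: Int_stable_def)
    show "Collect closed \<subseteq> Pow UNIV" by auto
    show "\<And>X. X \<in> Collect closed \<Longrightarrow> emeasure M X = emeasure N X" using emC by auto
    show "sets M = sigma_sets UNIV (Collect closed)" by (simp add: M_def sets_borel_closed)
    show "sets N = sigma_sets UNIV (Collect closed)" by (simp add: N_def sets_borel_closed)
    show "range (\<lambda>_. UNIV) \<subseteq> Collect closed" by auto
    show "(\<Union>i. (UNIV :: 'a set)) = UNIV" by auto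
    have "emeasure M UNIV = (\<integral>\<^sup>+ t. ennreal (u t) * indicator UNIV t \<partial>lborel)"
      unfolding M_def by (rule emeasure_density) auto
    also have "\<dots> \<le> (\<integral>\<^sup>+ t. ennreal (norm (u t)) \<partial>lborel)"
      by (intro nn_integral_mono) simp
    also have "\<dots> < \<infinity>" using ui by (simp add: integrable_iff_bounded)
    finally show "\<And>i. emeasure M UNIV \<noteq> \<infinity>" by simp
  qed
  define P where "P = {t. 0 < u t}"
  have Ps[measurable]: "P \<in> sets borel" unfolding P_def by measurable
  have "emeasure N P = (\<integral>\<^sup>+ t. ennreal (- u t) * indicator P t \<partial>lborel)"
    unfolding N_def by (rule emeasure_density) auto
  also have "\<dots> = 0"
  proof -
    have "(\<lambda>t. ennreal (- u t) * indicator P t) = (\<lambda>t. 0)"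
      by (auto simp: fun_eq_iff indicator_def P_def ennreal_neg)
    then show ?thesis by simp
  qed
  finally have "emeasure N P = 0" .
  then have "emeasure M P = 0" using \<open>M = N\<close> by simp
  moreover have "emeasure M P = (\<integral>\<^sup>+ t. ennreal (u t) * indicator P t \<partial>lborel)"
    unfolding M_def by (rule emeasure_density) auto
  ultimately have z: "(\<integral>\<^sup>+ t. ennreal (u t) * indicator P t \<partial>lborel) = 0" by simp
  have meas: "(\<lambda>t. ennreal (u t) * indicator P t) \<in> borel_measurable lborel" by measurable
  have "AE t in lborel. ennreal (u t) * indicator P t = 0"
    using nn_integral_0_iff_AE[OF meas] z by blast
  then show ?thesis
  proof eventually_elim
    fix t assume a: "ennreal (u t) * indicator P t = 0"
    show "u t \<le> 0"
    proof (rule ccontr)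
      assume "\<not> u t \<le> 0"
      then have "t \<in> P" "0 < u t" by (auto simp: P_def)
      with a show False by (simp add: indicator_def)
    qed
  qed
qed



lemma partial_exp_bound:
  fixes x :: real
  shows "\<bar>\<Sum>i<N. x ^ i / fact i\<bar> \<le> exp \<bar>x\<bar>"
proof -
  have sm: "(\<lambda>i. \<bar>x\<bar> ^ i / fact i) sums exp \<bar>x\<bar>"
    using exp_converges[of "\<bar>x\<bar>"] by (simp add: divide_inverse mult.commute)
  have "\<bar>\<Sum>i<N. x ^ i / fact i\<bar> \<le> (\<Sum>i<N. \<bar>x ^ i / fact i\<bar>)" by (rule sum_abs)
  also have "\<dots> = (\<Sum>i<N. \<bar>x\<bar> ^ i / fact i)" by (simp add: power_abs)
  also have "\<dots> \<le> (\<Sum>i. \<bar>x\<bar> ^ i / fact i)"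
    by (rule sum_le_suminf) (use sm sums_summable in auto)
  also have "\<dots> = exp \<bar>x\<bar>" using sm sums_unique by metis
  finally show ?thesis .
qed

lemma exp_moment_zero:
  fixes u :: "real^'n \<Rightarrow> real" and w :: "real^'n"
  assumes u: "good u" and m: "\<And>i. mom u w i = 0"
  shows "(\<integral> t. u t * exp (w \<bullet> t) \<partial>lborel) = 0"
proof -
  have um[measurable]: "u \<in> borel_measurable borel" and ui: "integrable lborel u"
    and u0: "\<And>t. t \<notin> cube 1 \<Longrightarrow> u t = 0" using u by (auto simp: good_def)
  have "continuous_on (cube 1) (\<lambda>t::real^'n. w \<bullet> t)" by (intro continuous_intros)
  then obtain B where B: "\<forall>t\<in>cube 1. \<bar>w \<bullet> t\<bar> \<le> B"
    using compact_continuous_image[OF _ compact_cube] compact_imp_bounded bounded_real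
    by (metis image_eqI)
  define s where "s N t = u t * (\<Sum>i<N. (w \<bullet> t) ^ i / fact i)" for N t
  have lim: "(\<lambda>N. \<integral> t. s N t \<partial>lborel) \<longlonglongrightarrow> (\<integral> t. u t * exp (w \<bullet> t) \<partial>lborel)"
  proof (rule integral_dominated_convergence[where w="\<lambda>t. \<bar>u t\<bar> * exp B"])
    show "(\<lambda>t. u t * exp (w \<bullet> t)) \<in> borel_measurable lborel" by measurable
    show "\<And>N. s N \<in> borel_measurable lborel" unfolding s_def by measurable
    show "integrable lborel (\<lambda>t. \<bar>u t\<bar> * exp B)" using ui by auto
    show "AE t in lborel. (\<lambda>N. s N t) \<longlonglongrightarrow> u t * exp (w \<bullet> t)"
    proof (rule AE_I2)
      fix t
      have "(\<lambda>i. (w \<bullet> t) ^ i / fact i) sums exp (w \<bullet> t)"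
        using exp_converges[of "w \<bullet> t"] by (simp add: divide_inverse mult.commute)
      then have "(\<lambda>N. \<Sum>i<N. (w \<bullet> t) ^ i / fact i) \<longlonglongrightarrow> exp (w \<bullet> t)" by (simp add: sums_def)
      then show "(\<lambda>N. s N t) \<longlonglongrightarrow> u t * exp (w \<bullet> t)" unfolding s_def by (intro tendsto_mult_left)
    qed
    show "AE t in lborel. norm (s N t) \<le> \<bar>u t\<bar> * exp B" for N
    proof (rule AE_I2)
      fix t
      show "norm (s N t) \<le> \<bar>u t\<bar> * exp B"
      proof (cases "t \<in> cube 1")
        case True
        have "\<bar>\<Sum>i<N. (w \<bullet> t) ^ i / fact i\<bar> \<le> exp \<bar>w \<bullet> t\<bar>" by (rule partial_exp_bound)
        also have "\<dots> \<le> exp B" using B True by auto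
        finally show ?thesis unfolding s_def by (simp add: abs_mult mult_left_mono)
      next
        case False then show ?thesis by (simp add: s_def u0)
      qed
    qed
  qed
  have z: "(\<integral> t. s N t \<partial>lborel) = 0" for N
  proof -
    have "(\<integral> t. s N t \<partial>lborel) = (\<integral> t. (\<Sum>i<N. u t * (w \<bullet> t) ^ i / fact i) \<partial>lborel)"
      unfolding s_def by (simp add: sum_distrib_left)
    also have "\<dots> = (\<Sum>i<N. mom u w i / fact i)"
      by (subst Bochner_Integration.integral_sum) (auto intro!: good_int[OF u] continuous_intros simp: mom_def)
    finally show ?thesis by (simp add: m)
  qed
  show ?thesis using lim unfolding z by (simp add: LIMSEQ_const_iff)
qed



lemma cont_zero:
  fixes u :: "real^'n \<Rightarrow> real"
  assumes u: "good u" and E: "\<And>w. (\<integral> t. u t * exp (w \<bullet> t) \<partial>lborel) = 0"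
    and f: "continuous_on (cube 1) f"
  shows "(\<integral> t. u t * f t \<partial>lborel) = 0"
proof -
  define K :: "(real^'n) set" where "K = cube 1"
  have um[measurable]: "u \<in> borel_measurable borel" and ui: "integrable lborel u"
    and u0: "\<And>t. t \<notin> K \<Longrightarrow> u t = 0" using u by (auto simp: good_def K_def)
  have cK: "compact K" by (simp add: K_def compact_cube)
  have intK: "continuous_on K q \<Longrightarrow> integrable lborel (\<lambda>t. u t * q t)" for q
    using um ui u0 cK by (intro integrable_mult_cont[where K=K]) auto
  define Pset where "Pset q \<longleftrightarrow> continuous_on K q \<and> (\<forall>w. (\<integral> t. u t * (q t * exp (w \<bullet> t)) \<partial>lborel) = 0)" for q
  define Q where "Q q \<longleftrightarrow> Pset q \<and> (\<forall>h. Pset h \<longrightarrow> Pset (\<lambda>t. q t * h t))" for q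
  have intE: "continuous_on K q \<Longrightarrow> integrable lborel (\<lambda>t. u t * (q t * exp (w \<bullet> t)))" for q w
    by (intro intK continuous_intros) auto
  have addP: "Pset (\<lambda>t. a t + b t)" if "Pset a" "Pset b" for a b
  proof -
    have ca: "continuous_on K a" and cb: "continuous_on K b" using that by (auto simp: Pset_def)
    show ?thesis unfolding Pset_def
    proof (intro conjI allI)
      show "continuous_on K (\<lambda>t. a t + b t)" using ca cb by (intro continuous_intros)
      fix w
      have "(\<integral> t. u t * ((a t + b t) * exp (w \<bullet> t)) \<partial>lborel)
          = (\<integral> t. u t * (a t * exp (w \<bullet> t)) + u t * (b t * exp (w \<bullet> t)) \<partial>lborel)"
        by (simp add: algebra_simps)
      also have "\<dots> = (\<integral> t. u t * (a t * exp (w \<bullet> t)) \<partial>lborel) + (\<integral> t. u t * (b t * exp (w \<bullet> t)) \<partial>lborel)"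
        by (rule Bochner_Integration.integral_add) (use intE ca cb in auto)
      also have "\<dots> = 0" using that by (simp add: Pset_def)
      finally show "(\<integral> t. u t * ((a t + b t) * exp (w \<bullet> t)) \<partial>lborel) = 0" .
    qed
  qed
  have cmulP: "Pset (\<lambda>t. c * a t)" if "Pset a" for a c
  proof -
    have ca: "continuous_on K a" using that by (auto simp: Pset_def)
    show ?thesis unfolding Pset_def
    proof (intro conjI allI)
      show "continuous_on K (\<lambda>t. c * a t)" using ca by (intro continuous_intros)
      fix w
      have "(\<integral> t. u t * (c * a t * exp (w \<bullet> t)) \<partial>lborel) = (\<integral> t. c * (u t * (a t * exp (w \<bullet> t))) \<partial>lborel)"
        by (simp add: mult_ac)
      also have "\<dots> = c * (\<integral> t. u t * (a t * exp (w \<bullet> t)) \<partial>lborel)" by (rule integral_mult_right_zero)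
      also have "\<dots> = 0" using that by (simp add: Pset_def)
      finally show "(\<integral> t. u t * (c * a t * exp (w \<bullet> t)) \<partial>lborel) = 0" .
    qed
  qed
  have constP: "Pset (\<lambda>t. c)" for c
    unfolding Pset_def
  proof (intro conjI allI)
    show "continuous_on K (\<lambda>t. c)" by (rule continuous_on_const)
    fix w
    have "(\<integral> t. u t * (c * exp (w \<bullet> t)) \<partial>lborel) = (\<integral> t. c * (u t * exp (w \<bullet> t)) \<partial>lborel)"
      by (simp add: mult_ac)
    also have "\<dots> = c * (\<integral> t. u t * exp (w \<bullet> t) \<partial>lborel)" by (rule integral_mult_right_zero)
    also have "\<dots> = 0" using E by simp
    finally show "(\<integral> t. u t * (c * exp (w \<bullet> t)) \<partial>lborel) = 0" .
  qed
  have expP: "Pset (\<lambda>t. exp (a \<bullet> t) * h t)" if "Pset h" for a h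
  proof -
    have ch: "continuous_on K h" using that by (auto simp: Pset_def)
    show ?thesis unfolding Pset_def
    proof (intro conjI allI)
      show "continuous_on K (\<lambda>t. exp (a \<bullet> t) * h t)" using ch by (intro continuous_intros)
      fix w
      have "(\<integral> t. u t * (exp (a \<bullet> t) * h t * exp (w \<bullet> t)) \<partial>lborel) = (\<integral> t. u t * (h t * exp ((a + w) \<bullet> t)) \<partial>lborel)"
        by (simp add: inner_add_left exp_add mult_ac)
      also have "\<dots> = 0" using that by (simp add: Pset_def)
      finally show "(\<integral> t. u t * (exp (a \<bullet> t) * h t * exp (w \<bullet> t)) \<partial>lborel) = 0" .
    qed
  qed
  have expP0: "Pset (\<lambda>t. exp (a \<bullet> t))" for a
    using expP[OF constP[of 1], of a] by simp
  have SW: "\<exists>g. Q g \<and> (\<forall>x\<in>K. \<bar>f x - g x\<bar> < e)" if e: "0 < e" for e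
  proof (rule Stone_Weierstrass_HOL[OF cK])
    show "Q (\<lambda>x. c)" for c unfolding Q_def using constP cmulP by blast
    show "Q g \<Longrightarrow> continuous_on K g" for g by (simp add: Q_def Pset_def)
    show "Q (\<lambda>x. g x + h x)" if "Q g \<and> Q h" for g h
      unfolding Q_def
    proof (intro conjI allI impI)
      show "Pset (\<lambda>x. g x + h x)" using that addP by (auto simp: Q_def)
      fix k assume "Pset k"
      then have "Pset (\<lambda>t. g t * k t + h t * k t)" using that addP by (auto simp: Q_def)
      then show "Pset (\<lambda>t. (g t + h t) * k t)" by (simp add: distrib_right)
    qed
    show "Q (\<lambda>x. g x * h x)" if "Q g \<and> Q h" for g h
      unfolding Q_def
    proof (intro conjI allI impI)
      show "Pset (\<lambda>x. g x * h x)" using that by (auto simp: Q_def)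
      fix k assume "Pset k"
      then have "Pset (\<lambda>t. g t * (h t * k t))" using that by (auto simp: Q_def)
      then show "Pset (\<lambda>t. g t * h t * k t)" by (simp add: mult.assoc)
    qed
    show "\<exists>g. Q g \<and> g x \<noteq> g y" if "x \<in> K \<and> y \<in> K \<and> x \<noteq> y" for x y
    proof -
      from that obtain i where i: "x $ i \<noteq> y $ i" by (auto simp: vec_eq_iff)
      define g where "g t = exp (axis i 1 \<bullet> t)" for t :: "real^'n"
      have "Q g" unfolding Q_def g_def using expP0 expP by blast
      moreover have "g x \<noteq> g y" using i by (simp add: g_def inner_axis')
      ultimately show ?thesis by blast
    qed
    show "continuous_on K f" using f by (simp add: K_def)
    show "0 < e" by fact
  qed
  have bound: "\<bar>\<integral> t. u t * f t \<partial>lborel\<bar> \<le> e * (\<integral> t. \<bar>u t\<bar> \<partial>lborel)" if e: "0 < e" for e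
  proof -
    obtain g where g: "Q g" "\<forall>x\<in>K. \<bar>f x - g x\<bar> < e" using SW[OF e] by blast
    have cg: "continuous_on K g" and pg: "Pset g" using g(1) by (auto simp: Q_def Pset_def)
    have cf: "continuous_on K f" using f by (simp add: K_def)
    have g0: "(\<integral> t. u t * g t \<partial>lborel) = 0"
      using pg unfolding Pset_def by (auto dest: spec[where x=0])
    have "(\<integral> t. u t * f t \<partial>lborel) = (\<integral> t. u t * (f t - g t) + u t * g t \<partial>lborel)"
      by (simp add: algebra_simps)
    also have "\<dots> = (\<integral> t. u t * (f t - g t) \<partial>lborel) + (\<integral> t. u t * g t \<partial>lborel)"
      by (rule Bochner_Integration.integral_add) (use cf cg in \<open>auto intro!: intK continuous_intros\<close>)
    finally have eq: "(\<integral> t. u t * f t \<partial>lborel) = (\<integral> t. u t * (f t - g t) \<partial>lborel)" using g0 by simp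
    have "\<bar>\<integral> t. u t * (f t - g t) \<partial>lborel\<bar> \<le> (\<integral> t. \<bar>u t\<bar> * e \<partial>lborel)"
    proof (rule integral_abs_bound_integral)
      show "integrable lborel (\<lambda>t. u t * (f t - g t))" using cf cg by (auto intro!: intK continuous_intros)
      show "integrable lborel (\<lambda>t. \<bar>u t\<bar> * e)" using ui by auto
      fix t
      show "\<bar>u t * (f t - g t)\<bar> \<le> \<bar>u t\<bar> * e"
      proof (cases "t \<in> K")
        case True
        then have "\<bar>f t - g t\<bar> \<le> e" using g(2) by (auto intro: less_imp_le)
        then have "\<bar>u t\<bar> * \<bar>f t - g t\<bar> \<le> \<bar>u t\<bar> * e" by (intro mult_left_mono) auto
        then show ?thesis by (simp add: abs_mult)
      next
        case False then show ?thesis by (simp add: u0)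
      qed
    qed
    also have "\<dots> = e * (\<integral> t. \<bar>u t\<bar> \<partial>lborel)" by (simp add: mult.commute)
    finally show ?thesis using eq by simp
  qed
  define I where "I = (\<integral> t. \<bar>u t\<bar> \<partial>lborel)"
  have I0: "0 \<le> I" unfolding I_def by (rule integral_nonneg_AE) auto
  define a where "a = (\<integral> t. u t * f t \<partial>lborel)"
  show ?thesis
  proof (rule ccontr)
    assume "\<not> ?thesis"
    then have a0: "0 < \<bar>a\<bar>" by (simp add: a_def)
    have pos: "0 < \<bar>a\<bar> / (I + 1)" using a0 I0 by simp
    have "\<bar>a\<bar> \<le> (\<bar>a\<bar> / (I + 1)) * I" using bound[OF pos] unfolding a_def I_def .
    also have "\<dots> < \<bar>a\<bar>" using a0 I0 by (simp add: field_simps)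
    finally show False by simp
  qed
qed



lemma closed_int_zero:
  fixes u :: "real^'n \<Rightarrow> real"
  assumes u: "good u" and Z: "\<And>f. continuous_on (cube 1) f \<Longrightarrow> (\<integral> t. u t * f t \<partial>lborel) = 0"
    and C: "closed C"
  shows "(\<integral> t. u t * indicator C t \<partial>lborel) = 0"
proof (cases "C = {}")
  case True then show ?thesis by simp
next
  case False
  have um[measurable]: "u \<in> borel_measurable borel" and ui: "integrable lborel u"
    using u by (auto simp: good_def)
  have Cs[measurable]: "C \<in> sets borel" using C by (rule borel_closed)
  define fm where "fm m t = max 0 (1 - real m * infdist t C)" for m :: nat and t :: "real^'n"
  have cfm: "continuous_on UNIV (fm m)" for m unfolding fm_def by (intro continuous_intros)
  have fmm[measurable]: "fm m \<in> borel_measurable borel" for m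
    using cfm by (rule borel_measurable_continuous_onI)
  have lim: "(\<lambda>m. \<integral> t. u t * fm m t \<partial>lborel) \<longlonglongrightarrow> (\<integral> t. u t * indicator C t \<partial>lborel)"
  proof (rule integral_dominated_convergence[where w="\<lambda>t. \<bar>u t\<bar>"])
    show "(\<lambda>t. u t * indicator C t) \<in> borel_measurable lborel" by measurable
    show "\<And>m. (\<lambda>t. u t * fm m t) \<in> borel_measurable lborel" by measurable
    show "integrable lborel (\<lambda>t. \<bar>u t\<bar>)" using ui by auto
    show "AE t in lborel. (\<lambda>m. u t * fm m t) \<longlonglongrightarrow> u t * indicator C t"
    proof (rule AE_I2)
      fix t
      show "(\<lambda>m. u t * fm m t) \<longlonglongrightarrow> u t * indicator C t"
      proof (cases "t \<in> C")
        case True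
        then show ?thesis by (simp add: fm_def)
      next
        case nC: False
        have d: "0 < infdist t C"
          using in_closed_iff_infdist_zero[OF C False, of t] nC infdist_nonneg[of t C] by auto
        obtain N :: nat where N: "1 / infdist t C \<le> real N" using real_arch_simple by blast
        have "\<forall>m\<ge>N. u t * fm m t = u t * indicator C t"
        proof (intro allI impI)
          fix m assume "N \<le> m"
          then have "1 / infdist t C \<le> real m" using N by linarith
          then have "1 \<le> real m * infdist t C" using d by (simp add: field_simps)
          then show "u t * fm m t = u t * indicator C t" using nC by (simp add: fm_def)
        qed
        then have "eventually (\<lambda>m. u t * fm m t = u t * indicator C t) sequentially"
          by (auto simp: eventually_sequentially)
        then show ?thesis by (rule tendsto_eventually)
      qed
    qed
    show "AE t in lborel. norm (u t * fm m t) \<le> \<bar>u t\<bar>" for m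
    proof (rule AE_I2)
      fix t
      have "0 \<le> real m * infdist t C" by (simp add: infdist_nonneg)
      then have "\<bar>fm m t\<bar> \<le> 1" by (simp add: fm_def)
      then have "\<bar>u t\<bar> * \<bar>fm m t\<bar> \<le> \<bar>u t\<bar> * 1" by (intro mult_left_mono) auto
      then show "norm (u t * fm m t) \<le> \<bar>u t\<bar>" by (simp add: abs_mult)
    qed
  qed
  have "(\<integral> t. u t * fm m t \<partial>lborel) = 0" for m
    using cfm by (intro Z) (auto intro: continuous_on_subset)
  then show ?thesis using lim by (simp add: LIMSEQ_const_iff)
qed

lemma moments_zero_AE:
  fixes u :: "real^'n \<Rightarrow> real"
  assumes u: "good u" and m: "\<And>w i. mom u w i = 0"
  shows "AE t in lborel. u t = 0"
proof -
  have um[measurable]: "u \<in> borel_measurable borel" and ui: "integrable lborel u"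
    using u by (auto simp: good_def)
  have E: "(\<integral> t. u t * exp (w \<bullet> t) \<partial>lborel) = 0" for w
    using exp_moment_zero[OF u m] by blast
  have Z: "(\<integral> t. u t * f t \<partial>lborel) = 0" if "continuous_on (cube 1) f" for f
    using cont_zero[OF u E that] by blast
  have Cz: "(\<integral> t. u t * indicator C t \<partial>lborel) = 0" if "closed C" for C
    using closed_int_zero[OF u Z that] by blast
  have A1: "AE t in lborel. u t \<le> 0"
    by (rule closed_zero_AE_le[OF um ui Cz])
  have A2: "AE t in lborel. - u t \<le> 0"
  proof (rule closed_zero_AE_le)
    show "(\<lambda>t. - u t) \<in> borel_measurable borel" by measurable
    show "integrable lborel (\<lambda>t. - u t)" using ui by simp
    fix C :: "(real^'n) set" assume "closed C"
    then show "(\<integral> t. - u t * indicator C t \<partial>lborel) = 0" using Cz by simp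
  qed
  show ?thesis using A1 A2 by eventually_elim simp
qed



lemma good_diff: "good g \<Longrightarrow> good h \<Longrightarrow> good (\<lambda>t. g t - h t)"
  and good_add: "good g \<Longrightarrow> good h \<Longrightarrow> good (\<lambda>t. g t + h t)"
  by (auto simp: good_def)

lemma mom_diff: "good g \<Longrightarrow> good h \<Longrightarrow> mom (\<lambda>t. g t - h t) w i = mom g w i - mom h w i"
  unfolding mom_def
  by (subst Bochner_Integration.integral_diff[symmetric])
     (auto intro!: good_int continuous_intros simp: left_diff_distrib)

lemma mom_add: "good g \<Longrightarrow> good h \<Longrightarrow> mom (\<lambda>t. g t + h t) w i = mom g w i + mom h w i"
  unfolding mom_def
  by (subst Bochner_Integration.integral_add[symmetric])
     (auto intro!: good_int continuous_intros simp: distrib_right)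

lemma cv_outside:
  fixes g :: "real^'n \<Rightarrow> real"
  assumes g: "good g" and s: "s \<notin> cube 2"
  shows "cv g g s = 0"
proof -
  have g0: "\<And>t. t \<notin> cube 1 \<Longrightarrow> g t = 0" using g by (auto simp: good_def)
  have "g (s - t) * g t = 0" for t
  proof (rule ccontr)
    assume "g (s - t) * g t \<noteq> 0"
    then have "s - t \<in> cube 1" "t \<in> cube 1" using g0 by force+
    then have "s \<in> cube 2" using cube_add[of "s - t" t] by simp
    with s show False by simp
  qed
  then have "(\<lambda>t. g (s - t) * g t) = (\<lambda>t. 0)" by (rule ext)
  then show ?thesis by (simp add: cv_def)
qed

theorem theorem3p2:
  fixes y xd x :: "real^'n \<Rightarrow> real"
  assumes "y \<in> L2_cube 2"
    and "xd \<in> L2_cube 1"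
    and "AE s in lebesgue. s \<in> cube 2 \<longrightarrow> conv xd xd s = y s"
    and "x \<in> L2_cube 1"
    and "AE s in lebesgue. s \<in> cube 2 \<longrightarrow> conv x x s = y s"
  shows "(AE s in lebesgue. x s = xd s) \<or> (AE s in lebesgue. x s = - xd s)"
proof -
  obtain g where gb: "g \<in> borel_measurable borel" and gi: "integrable lborel g"
    and g0: "\<forall>t. t \<notin> cube 1 \<longrightarrow> g t = 0" and xg: "AE t in lborel. x t = g t"
    using L2_borel_version[OF assms(4)] by blast
  obtain h where hb: "h \<in> borel_measurable borel" and hi: "integrable lborel h"
    and h0: "\<forall>t. t \<notin> cube 1 \<longrightarrow> h t = 0" and xh: "AE t in lborel. xd t = h t"
    using L2_borel_version[OF assms(2)] by blast
  have gg: "good g" using gb gi g0 by (simp add: good_def)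
  have hg: "good h" using hb hi h0 by (simp add: good_def)
  have xm: "x \<in> borel_measurable lebesgue" using assms(4) by (simp add: L2_cube_def)
  have xdm: "xd \<in> borel_measurable lebesgue" using assms(2) by (simp add: L2_cube_def)
  have cx: "conv x x s = cv g g s" for s
    unfolding cv_def by (rule conv_eq[OF xm xm gb gb xg xg])
  have cxd: "conv xd xd s = cv h h s" for s
    unfolding cv_def by (rule conv_eq[OF xdm xdm hb hb xh xh])
  have ae3: "AE s in lborel. s \<in> cube 2 \<longrightarrow> conv xd xd s = y s"
    using assms(3) by (simp add: AE_completion_iff)
  have ae5: "AE s in lborel. s \<in> cube 2 \<longrightarrow> conv x x s = y s"
    using assms(5) by (simp add: AE_completion_iff)
  have aecv: "AE s in lborel. cv g g s = cv h h s"
    using ae3 ae5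
  proof eventually_elim
    fix s assume a3: "s \<in> cube 2 \<longrightarrow> conv xd xd s = y s" and a5: "s \<in> cube 2 \<longrightarrow> conv x x s = y s"
    show "cv g g s = cv h h s"
    proof (cases "s \<in> cube 2")
      case True then show ?thesis using a3 a5 cx cxd by simp
    next
      case False then show ?thesis using cv_outside[OF gg] cv_outside[OF hg] by simp
    qed
  qed
  have sgn: "(\<forall>i. mom g w i = mom h w i) \<or> (\<forall>i. mom g w i = - mom h w i)" for w
  proof (rule fps_sign)
    fix k
    have "(\<integral> s. cv g g s * (w \<bullet> s) ^ k \<partial>lborel) = (\<integral> s. cv h h s * (w \<bullet> s) ^ k \<partial>lborel)"
    proof (rule integral_cong_AE)
      show "(\<lambda>s. cv g g s * (w \<bullet> s) ^ k) \<in> borel_measurable lborel"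
        using cv_moment(1)[OF gg gg, of w k] by (rule borel_measurable_integrable)
      show "(\<lambda>s. cv h h s * (w \<bullet> s) ^ k) \<in> borel_measurable lborel"
        using cv_moment(1)[OF hg hg, of w k] by (rule borel_measurable_integrable)
      show "AE s in lborel. cv g g s * (w \<bullet> s) ^ k = cv h h s * (w \<bullet> s) ^ k"
        using aecv by eventually_elim simp
    qed
    then show "(\<Sum>i\<le>k. of_nat (k choose i) * mom g w i * mom g w (k - i))
             = (\<Sum>i\<le>k. of_nat (k choose i) * mom h w i * mom h w (k - i))"
      using cv_moment(2)[OF gg gg, of w k] cv_moment(2)[OF hg hg, of w k] by simp
  qed
  define u1 where "u1 t = g t - h t" for t
  define u2 where "u2 t = g t + h t" for t
  have u1g: "good u1" unfolding u1_def by (rule good_diff[OF gg hg])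
  have u2g: "good u2" unfolding u2_def by (rule good_add[OF gg hg])
  have H: "(\<forall>i. mom u1 w i = 0) \<or> (\<forall>i. mom u2 w i = 0)" for w
    using sgn[of w] unfolding u1_def u2_def by (auto simp: mom_diff[OF gg hg] mom_add[OF gg hg])
  from sign_global[OF u1g u2g H] show ?thesis
  proof
    assume "\<forall>w i. mom u1 w i = 0"
    then have "AE t in lborel. u1 t = 0" using moments_zero_AE[OF u1g] by blast
    then have "AE t in lborel. x t = xd t"
      using xg xh by eventually_elim (simp add: u1_def)
    then show ?thesis by (simp add: AE_completion_iff)
  next
    assume "\<forall>w i. mom u2 w i = 0"
    then have "AE t in lborel. u2 t = 0" using moments_zero_AE[OF u2g] by blast
    then have "AE t in lborel. x t = - xd t"
      using xg xh by eventually_elim (simp add: u2_def eq_neg_iff_add_eq_0)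
    then show ?thesis by (simp add: AE_completion_iff)
  qed
qed

end
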